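(* Let $\delta\in\mathbb{C}\setminus\{0\}$ with $\mathrm{Re}(\delta)\ge0$, and let $r\in\mathbb{Z}_{\ge1}$. Then $$P^{\lfloor \mathrm{Re}(\delta)\rfloor+1}\big[X^{\delta}q_r(\alpha)\big](X)\longrightarrow 0\quad\text{classically as } X\to\infty .$$
   Context: For $X>0$ write $X=k+\alpha$ with $k=\lfloor X\rfloor$, $\alpha=X-\lfloor X\rfloor\in[0,1)$; $X^\delta$ is the principal power. $P[f](X)=\frac1X\int_0^X f(x)\,dx$ for locally integrable $f$ on $(0,\infty)$. The polynomials $q_n$ are defined by $q_1(\alpha)=\alpha-\tfrac12$ and, for $n\ge1$, $q_{n+1}$ is the unique polynomial with $q_{n+1}'=q_n$ and $\int_0^1 q_{n+1}(\alpha)\,d\alpha=0$ (e.g. $q_2(\alpha)=\tfrac12\alpha^2-\tfrac12\alpha+\tfrac1{12}$); $q_r(\alpha)$ is regarded as a period-1 function of $X$. *)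

theory Defs
  imports "HOL-Analysis.Analysis"
begin

text \<open>We set q_0 = 1 so that uniformly
  q_(n+1)(a) = int_0^a q_n - c_n with c_n chosen so that int_0^1 q_(n+1) = 0;
  this gives q_1(a) = a - 1/2, q_(n+1)' = q_n and int_0^1 q_(n+1) = 0 on [0,1],
  which determines the polynomials on [0,1] (the only range where they are evaluated).\<close>
fun qpoly :: "nat \<Rightarrow> real \<Rightarrow> real" where
  "qpoly 0 = (\<lambda>_. 1)"
| "qpoly (Suc n) = (\<lambda>a. integral {0..a} (qpoly n)
                         - integral {0..1} (\<lambda>b. integral {0..b} (qpoly n)))"

definition cesaroP :: "(real \<Rightarrow> complex) \<Rightarrow> real \<Rightarrow> complex" where
  "cesaroP f X = integral {0..X} f / of_real X"

end

theory Submission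
  imports Defs
begin


lemma qpoly_cont: "continuous_on {0..1} (qpoly n)"
proof (induction n)
  case 0 then show ?case by simp
next
  case (Suc n)
  have "continuous_on {0..1} (\<lambda>a. integral {0..a} (qpoly n))"
    by (rule indefinite_integral_continuous_1[OF integrable_continuous_interval[OF Suc]])
  then show ?case by (simp add: continuous_on_diff)
qed

lemma qpoly_deriv:
  assumes "a \<in> {0<..<1}"
  shows "(qpoly (Suc n) has_real_derivative qpoly n a) (at a)"
proof -
  have "((\<lambda>x. integral {0..x} (qpoly n)) has_real_derivative qpoly n a) (at a within {0..1})"
    using assms by (intro integral_has_real_derivative qpoly_cont) auto
  then have "((\<lambda>x. integral {0..x} (qpoly n)) has_real_derivative qpoly n a) (at a)"
    using assms by (subst (asm) at_within_interior) auto
  then have "((\<lambda>x. integral {0..x} (qpoly n) - integral {0..1} (\<lambda>b. integral {0..b} (qpoly n))) has_real_derivative qpoly n a) (at a)"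
    by (auto intro!: derivative_eq_intros)
  then show ?thesis by simp
qed

lemma qpoly_int0: "integral {0..1} (qpoly (Suc n)) = 0"
proof -
  have i: "(\<lambda>b. integral {0..b} (qpoly n)) integrable_on {0..1}"
    by (intro integrable_continuous_interval indefinite_integral_continuous_1 integrable_continuous_interval qpoly_cont)
  have c: "integral {0..1::real} (\<lambda>_. C) = C" for C :: real
    using integral_unique[OF has_integral_const_real[of C 0 1]] by simp
  define A where "A = integral {0..1} (\<lambda>b. integral {0..b} (qpoly n))"
  have "integral {0..1} (qpoly (Suc n)) = integral {0..1} (\<lambda>a. integral {0..a} (qpoly n) - A)"
    by (simp add: A_def)
  also have "\<dots> = A - integral {0..1::real} (\<lambda>_. A)"
    unfolding A_def by (rule integral_diff[OF i integrable_continuous_interval[OF continuous_on_const]])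
  also have "\<dots> = 0" by (simp only: c)
  finally show ?thesis .
qed

lemma qpoly_per: "n \<ge> 1 \<Longrightarrow> qpoly (Suc n) 1 = qpoly (Suc n) 0"
proof -
  assume "n \<ge> 1"
  then obtain m where "n = Suc m" by (cases n) auto
  then show ?thesis using qpoly_int0[of m] by simp
qed

lemma qpoly_bound: "\<exists>M. \<forall>x. \<bar>qpoly n (frac x)\<bar> \<le> M"
proof -
  have "compact (qpoly n ` {0..1})" by (intro compact_continuous_image qpoly_cont) auto
  then obtain M where "\<forall>y\<in>qpoly n ` {0..1}. norm y \<le> M" by (meson compact_imp_bounded bounded_iff)
  moreover have "frac x \<in> {0..1}" for x :: real using frac_lt_1[of x] by auto
  ultimately have "\<forall>x. \<bar>qpoly n (frac x)\<bar> \<le> M" by fastforce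
  then show ?thesis by blast
qed

lemma frac_piece:
  fixes m :: int and y :: real
  assumes "g 0 = g 1" "y \<in> {of_int m..of_int m + 1}"
  shows "g (frac y) = g (y - of_int m)"
proof (cases "y = of_int m + 1")
  case True
  then have "frac y = 0" by simp
  then show ?thesis using True assms(1) by simp
next
  case False
  then have "floor y = m" using assms(2) by (simp add: floor_eq_iff)
  then show ?thesis by (simp add: frac_def)
qed

lemma per_cont:
  fixes g :: "real \<Rightarrow> real"
  assumes "continuous_on {0..1} g" "g 0 = g 1"
  shows "isCont (\<lambda>x. g (frac x)) x"
proof -
  have piece: "continuous_on {of_int m..of_int m + 1} (\<lambda>x. g (frac x))" for m :: int
  proof -
    have "continuous_on {of_int m..of_int m + 1} (\<lambda>x. g (x - of_int m))"
      by (rule continuous_on_compose2[OF assms(1)]) (auto intro!: continuous_intros)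
    then show ?thesis
      by (rule continuous_on_eq) (use frac_piece[OF assms(2)] in auto)
  qed
  define n where "n = floor x"
  have "continuous_on ({of_int (n-1)..of_int (n-1) + 1} \<union> {of_int n..of_int n + 1}) (\<lambda>x. g (frac x))"
    by (intro continuous_on_closed_Un piece) auto
  moreover have "{of_int (n-1)..of_int (n-1) + 1} \<union> {of_int n..of_int n + 1} = {of_int n - 1..of_int n + (1::real)}"
    by auto
  moreover have "x \<in> interior {of_int n - 1..of_int n + (1::real)}"
  proof -
    have "of_int n - 1 < x" "x < of_int n + 1" unfolding n_def
      using of_int_floor_le[of x] floor_correct[of x] by linarith+
    then show ?thesis unfolding interior_atLeastAtMost_real by simp
  qed
  ultimately show ?thesis using continuous_on_interior by metis
qed

lemma Q_cont: "k \<ge> 2 \<Longrightarrow> isCont (\<lambda>x. qpoly k (frac x)) x"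
proof -
  assume "k \<ge> 2"
  then obtain j where j: "k = Suc j" "j \<ge> 1" by (cases k) auto
  show ?thesis unfolding j(1)
    by (rule per_cont[OF qpoly_cont qpoly_per[OF j(2), symmetric]])
qed

lemma Q_deriv:
  assumes "x \<notin> \<int>"
  shows "((\<lambda>x. qpoly (Suc k) (frac x)) has_real_derivative qpoly k (frac x)) (at x)"
proof -
  define n where "n = floor x"
  have fx: "frac x \<in> {0<..<1}" using assms frac_lt_1[of x] by auto
  have d: "(qpoly (Suc k) has_real_derivative qpoly k (x - of_int n)) (at (x - of_int n))"
    using qpoly_deriv fx by (simp add: n_def frac_def)
  have d2: "((\<lambda>y. y - of_int n) has_real_derivative 1) (at x)"
    by (auto intro!: derivative_eq_intros)
  have "((\<lambda>y. qpoly (Suc k) (y - of_int n)) has_real_derivative qpoly k (x - of_int n)) (at x)"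
    using DERIV_chain2[OF d d2] by simp
  then have "((\<lambda>y. qpoly (Suc k) (y - of_int n)) has_real_derivative qpoly k (frac x)) (at x)"
    by (simp add: n_def frac_def)
  then show ?thesis
  proof (rule has_field_derivative_transform_within_open[where S="{of_int n<..<of_int n + 1}"])
    show "x \<in> {real_of_int n<..<real_of_int n + 1}"
      using fx by (auto simp: n_def frac_def)
    fix y assume "y \<in> {real_of_int n<..<real_of_int n + 1}"
    then have "floor y = n" by (simp add: floor_eq_iff)
    then show "qpoly (Suc k) (y - of_int n) = qpoly (Suc k) (frac y)" by (simp add: frac_def)
  qed auto
qed

lemma bm_int:
  fixes g :: "real \<Rightarrow> complex"
  assumes "g \<in> borel_measurable borel" "\<And>x. x \<in> {a..b} \<Longrightarrow> norm (g x) \<le> B"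
  shows "g integrable_on {a..b}"
proof (rule measurable_bounded_by_integrable_imp_integrable[where g="\<lambda>_. B"])
  have "g \<in> borel_measurable lebesgue"
  proof -
    have "g \<in> borel_measurable lborel" using assms(1) by simp
    then show ?thesis by (rule measurable_completion)
  qed
  then show "g \<in> borel_measurable (lebesgue_on {a..b})"
    by (rule measurable_restrict_space1)
qed (use assms in auto)

definition fb :: "complex \<Rightarrow> nat \<Rightarrow> real \<Rightarrow> complex" where
  "fb \<beta> r x = of_real x powr \<beta> * of_real (qpoly r (frac x))"

lemma fb_0 [simp]: "fb \<beta> r 0 = 0"
  by (simp add: fb_def)

lemma fb_norm: "x \<ge> 0 \<Longrightarrow> norm (fb \<beta> r x) = x powr Re \<beta> * \<bar>qpoly r (frac x)\<bar>"
  by (simp add: fb_def norm_mult norm_powr_real_powr)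

lemma fb_tendsto0:
  assumes "Re \<beta> < 0"
  shows "(fb \<beta> r \<longlongrightarrow> 0) at_top"
proof -
  obtain M where M: "\<And>x. \<bar>qpoly r (frac x)\<bar> \<le> M" using qpoly_bound by blast
  show ?thesis
  proof (rule Lim_null_comparison)
    show "\<forall>\<^sub>F x in at_top. norm (fb \<beta> r x) \<le> x powr Re \<beta> * M"
      using eventually_ge_at_top[of 0]
      by eventually_elim (auto simp: fb_norm intro!: mult_left_mono M)
    have "((\<lambda>x. x powr Re \<beta>) \<longlongrightarrow> 0) at_top"
      by (rule tendsto_neg_powr[OF assms filterlim_ident])
    then show "((\<lambda>x. x powr Re \<beta> * M) \<longlongrightarrow> 0) at_top"
      by (rule tendsto_mult_left_zero)
  qed
qed

lemma fb_bounded: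
  assumes "Re \<beta> \<ge> 0"
  shows "\<exists>B. \<forall>x\<in>{0..X}. norm (fb \<beta> r x) \<le> B"
proof -
  obtain M where M: "\<And>x. \<bar>qpoly r (frac x)\<bar> \<le> M" using qpoly_bound by blast
  have "norm (fb \<beta> r x) \<le> X powr Re \<beta> * M" if "x \<in> {0..X}" for x
  proof -
    have "norm (fb \<beta> r x) = x powr Re \<beta> * \<bar>qpoly r (frac x)\<bar>" using that by (simp add: fb_norm)
    also have "\<dots> \<le> X powr Re \<beta> * M"
      using that assms M[of x] by (intro mult_mono powr_mono2) auto
    finally show ?thesis .
  qed
  then show ?thesis by blast
qed

lemma fb_cont:
  assumes "x > 0" "x \<notin> \<int>" "r \<ge> 1"
  shows "isCont (fb \<beta> r) x"
proof -
  obtain k where k: "r = Suc k" using assms(3) by (cases r) auto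
  have "isCont (\<lambda>x. qpoly r (frac x)) x"
    unfolding k using Q_deriv[OF assms(2)] DERIV_isCont by blast
  then have "isCont (\<lambda>x. of_real (qpoly r (frac x)) :: complex) x"
    by (intro continuous_intros)
  moreover have "isCont (\<lambda>x. of_real x powr \<beta>) x"
    using assms(1) by (intro isCont_powr_complex continuous_intros) (auto simp: complex_nonpos_Reals_iff)
  ultimately show ?thesis unfolding fb_def by (rule isCont_mult[rotated])
qed

lemma fb_meas:
  assumes "r \<ge> 1"
  shows "(\<lambda>x. if 0 < x then fb \<beta> r x else 0) \<in> borel_measurable borel"
proof (rule borel_measurable_continuous_countable_exceptions[where X="\<int>"])
  show "countable (\<int> :: real set)" by (simp add: Ints_def)
  show "continuous_on (- \<int>) (\<lambda>x. if 0 < x then fb \<beta> r x else 0)"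
  proof (rule continuous_at_imp_continuous_on, safe)
    fix x :: real assume x: "x \<notin> \<int>"
    show "isCont (\<lambda>x. if 0 < x then fb \<beta> r x else 0) x"
    proof (cases "x > 0")
      case True
      have "eventually (\<lambda>y. y \<in> {0<..}) (nhds x)" using True by (intro eventually_nhds_in_open) auto
      then have "eventually (\<lambda>y. fb \<beta> r y = (if 0 < y then fb \<beta> r y else 0)) (nhds x)"
        by eventually_elim auto
      then have "isCont (fb \<beta> r) x \<longleftrightarrow> isCont (\<lambda>x. if 0 < x then fb \<beta> r x else 0) x"
        by (rule isCont_cong)
      then show ?thesis using fb_cont[OF True x assms] by blast
    next
      case False
      then have "x < 0" using x by (cases "x = 0") auto
      then have "eventually (\<lambda>y. y \<in> {..<0}) (nhds x)" by (intro eventually_nhds_in_open) auto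
      then have "eventually (\<lambda>y. (\<lambda>_. 0) y = (if 0 < y then fb \<beta> r y else 0)) (nhds x)"
        by eventually_elim auto
      then have "isCont (\<lambda>_. 0::complex) x \<longleftrightarrow> isCont (\<lambda>x. if 0 < x then fb \<beta> r x else 0) x"
        by (rule isCont_cong[where f="\<lambda>_. 0::complex"])
      then show ?thesis by simp
    qed
  qed
qed

lemma fb_int:
  assumes "r \<ge> 1" "Re \<beta> \<ge> 0"
  shows "fb \<beta> r integrable_on {0..X}"
proof -
  obtain B0 where B0: "\<forall>x\<in>{0..X}. norm (fb \<beta> r x) \<le> B0" using fb_bounded[OF assms(2)] by blast
  define B where "B = max B0 0"
  have B: "\<forall>x\<in>{0..X}. norm (fb \<beta> r x) \<le> B" "B \<ge> 0" using B0 unfolding B_def by force+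
  have "(\<lambda>x. if 0 < x then fb \<beta> r x else 0) integrable_on {0..X}"
    by (rule bm_int[OF fb_meas[OF assms(1)]]) (use B in auto)
  then show ?thesis by (rule integrable_eq) auto
qed



lemma int_bound:
  fixes g :: "real \<Rightarrow> complex"
  assumes "g integrable_on {a..b}" "a \<le> b" "0 \<le> B" "\<And>x. x \<in> {a..b} \<Longrightarrow> norm (g x) \<le> B"
  shows "norm (integral {a..b} g) \<le> B * (b - a)"
  using integrable_bound[of B g a b] assms by (simp add: content_real)

definition Lc :: "(real \<Rightarrow> complex) \<Rightarrow> bool" where
  "Lc g \<longleftrightarrow> (\<forall>X. g integrable_on {0..X}) \<and> (\<forall>X. \<exists>B\<ge>0. \<forall>x\<in>{0..X}. norm (g x) \<le> B)"

lemma Lc_fb: "r \<ge> 1 \<Longrightarrow> Re \<beta> \<ge> 0 \<Longrightarrow> Lc (fb \<beta> r)"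
  unfolding Lc_def
proof (intro conjI allI)
  fix X assume "r \<ge> 1" "Re \<beta> \<ge> 0"
  then show "fb \<beta> r integrable_on {0..X}" by (rule fb_int)
  obtain B0 where B0: "\<forall>x\<in>{0..X}. norm (fb \<beta> r x) \<le> B0" using fb_bounded[OF \<open>Re \<beta> \<ge> 0\<close>] by blast
  show "\<exists>B\<ge>0. \<forall>x\<in>{0..X}. norm (fb \<beta> r x) \<le> B"
    by (rule exI[of _ "max B0 0"]) (use B0 in force)
qed

lemma P_neg: "X < 0 \<Longrightarrow> cesaroP g X = 0"
  by (simp add: cesaroP_def)

lemma P_cont:
  assumes "Lc g" "x \<noteq> 0"
  shows "isCont (cesaroP g) x"
proof (cases "x > 0")
  case True
  have "continuous_on {0..x+1} (\<lambda>y. integral {0..y} g)"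
    using assms(1) unfolding Lc_def by (intro indefinite_integral_continuous_1) auto
  then have "isCont (\<lambda>y. integral {0..y} g) x"
    by (rule continuous_on_interior) (use True in auto)
  then show ?thesis unfolding cesaroP_def using True
    by (intro continuous_intros) auto
next
  case False
  then have "x < 0" using assms by auto
  then have "eventually (\<lambda>y. y \<in> {..<0}) (nhds x)" by (intro eventually_nhds_in_open) auto
  then have "eventually (\<lambda>y. 0 = cesaroP g y) (nhds x)"
    by eventually_elim (auto simp: P_neg)
  then have "isCont (\<lambda>_. 0::complex) x \<longleftrightarrow> isCont (cesaroP g) x"
    by (rule isCont_cong[where f="\<lambda>_. 0::complex"])
  then show ?thesis by simp
qed

lemma Lc_P: "Lc g \<Longrightarrow> Lc (cesaroP g)"
proof -
  assume L: "Lc g"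
  have bd: "\<exists>B\<ge>0. \<forall>x\<in>{0..X}. norm (cesaroP g x) \<le> B" for X
  proof -
    obtain B where B: "B \<ge> 0" "\<forall>x\<in>{0..X}. norm (g x) \<le> B" using L unfolding Lc_def by blast
    have "norm (cesaroP g x) \<le> B" if x: "x \<in> {0..X}" for x
    proof (cases "x = 0")
      case True then show ?thesis using B by (simp add: cesaroP_def)
    next
      case False
      then have xp: "x > 0" using x by auto
      have "norm (integral {0..x} g) \<le> B * (x - 0)"
        using L x B unfolding Lc_def by (intro int_bound) auto
      then show ?thesis using xp by (simp add: cesaroP_def norm_divide field_simps)
    qed
    then show ?thesis using B by blast
  qed
  have meas: "cesaroP g \<in> borel_measurable borel"
  proof (rule borel_measurable_continuous_countable_exceptions[where X="{0}"])
    show "continuous_on (- {0}) (cesaroP g)"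
      by (rule continuous_at_imp_continuous_on) (use P_cont[OF L] in auto)
  qed auto
  show ?thesis unfolding Lc_def
  proof (intro conjI allI)
    fix X
    obtain B where B: "B \<ge> 0" "\<forall>x\<in>{0..X}. norm (cesaroP g x) \<le> B" using bd by blast
    show "cesaroP g integrable_on {0..X}"
      by (rule bm_int[OF meas]) (use B in auto)
  qed (rule bd)
qed

lemma Lc_iter: "Lc g \<Longrightarrow> Lc ((cesaroP ^^ k) g)"
  by (induction k) (auto intro: Lc_P)

lemma Lc_add: "Lc g \<Longrightarrow> Lc h \<Longrightarrow> Lc (\<lambda>x. g x + h x)"
  unfolding Lc_def
proof (intro conjI allI; elim conjE)
  fix X
  assume a: "\<forall>X. g integrable_on {0..X}" "\<forall>X. \<exists>B\<ge>0. \<forall>x\<in>{0..X}. norm (g x) \<le> B"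
     "\<forall>X. h integrable_on {0..X}" "\<forall>X. \<exists>B\<ge>0. \<forall>x\<in>{0..X}. norm (h x) \<le> B"
  then show "(\<lambda>x. g x + h x) integrable_on {0..X}" by (intro integrable_add) auto
  obtain B1 B2 where "B1 \<ge> 0" "\<forall>x\<in>{0..X}. norm (g x) \<le> B1" "B2 \<ge> 0" "\<forall>x\<in>{0..X}. norm (h x) \<le> B2"
    using a by meson
  then show "\<exists>B\<ge>0. \<forall>x\<in>{0..X}. norm (g x + h x) \<le> B"
    by (intro exI[of _ "B1 + B2"]) (auto intro: norm_triangle_le add_mono)
qed

lemma Lc_scale: "Lc g \<Longrightarrow> Lc (\<lambda>x. c * g x)"
  unfolding Lc_def
proof (intro conjI allI; elim conjE)
  fix X
  assume a: "\<forall>X. g integrable_on {0..X}" "\<forall>X. \<exists>B\<ge>0. \<forall>x\<in>{0..X}. norm (g x) \<le> B"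
  then show "(\<lambda>x. c * g x) integrable_on {0..X}" by (intro integrable_on_mult_right) auto
  obtain B1 where "B1 \<ge> 0" "\<forall>x\<in>{0..X}. norm (g x) \<le> B1"
    using a by meson
  then show "\<exists>B\<ge>0. \<forall>x\<in>{0..X}. norm (c * g x) \<le> B"
    by (intro exI[of _ "norm c * B1"]) (auto simp: norm_mult intro: mult_left_mono)
qed

lemma P_add: "Lc g \<Longrightarrow> Lc h \<Longrightarrow> cesaroP (\<lambda>x. g x + h x) = (\<lambda>x. cesaroP g x + cesaroP h x)"
  unfolding Lc_def cesaroP_def by (auto simp: integral_add add_divide_distrib)

lemma P_scale: "cesaroP (\<lambda>x. c * g x) = (\<lambda>x. c * cesaroP g x)"
  unfolding cesaroP_def by auto

lemma Piter_add: "Lc g \<Longrightarrow> Lc h \<Longrightarrow> (cesaroP ^^ k) (\<lambda>x. g x + h x) = (\<lambda>x. (cesaroP ^^ k) g x + (cesaroP ^^ k) h x)"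
  by (induction k) (auto simp: P_add Lc_iter)

lemma Piter_scale: "(cesaroP ^^ k) (\<lambda>x. c * g x) = (\<lambda>x. c * (cesaroP ^^ k) g x)"
  by (induction k) (auto simp: P_scale)

lemma P_cong: "(\<And>x. x \<ge> 0 \<Longrightarrow> g x = h x) \<Longrightarrow> cesaroP g = cesaroP h"
  unfolding cesaroP_def by (intro ext arg_cong2[where f="(/)"] integral_cong) auto

lemma Piter_cong: "(\<And>x. x \<ge> 0 \<Longrightarrow> g x = h x) \<Longrightarrow> x \<ge> 0 \<Longrightarrow> (cesaroP ^^ k) g x = (cesaroP ^^ k) h x"
proof (induction k arbitrary: x)
  case 0 then show ?case by simp
next
  case (Suc k)
  have "cesaroP ((cesaroP ^^ k) g) = cesaroP ((cesaroP ^^ k) h)"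
    by (rule P_cong) (use Suc in auto)
  then show ?case by simp
qed



lemma ces_gen:
  fixes g :: "real \<Rightarrow> complex"
  assumes int: "\<And>X. g integrable_on {a..X}" and lim: "(g \<longlongrightarrow> 0) at_top"
  shows "((\<lambda>X. integral {a..X} g / of_real X) \<longlongrightarrow> 0) at_top"
  unfolding tendsto_iff
proof (intro allI impI)
  fix e :: real assume e: "e > 0"
  have e2: "e/2 > 0" using e by simp
  have "eventually (\<lambda>x. dist (g x) 0 < e/2) at_top" using lim[unfolded tendsto_iff, rule_format, OF e2] .
  then obtain T0 where T0: "\<And>x. x \<ge> T0 \<Longrightarrow> norm (g x) < e/2"
    unfolding eventually_at_top_linorder by auto
  define T where "T = max T0 (max a 1)"
  define C where "C = norm (integral {a..T} g)"
  have "norm (integral {a..X} g / of_real X) < e" if X: "X \<ge> max T (2 * C / e + 1)" for X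
  proof -
    have XT: "X \<ge> T" and XC: "X > 2 * C / e" using X by auto
    have Xpos: "X > 0" using XT unfolding T_def by auto
    have aT: "a \<le> T" "T \<le> X" using XT unfolding T_def by auto
    have split: "integral {a..X} g = integral {a..T} g + integral {T..X} g"
      using Henstock_Kurzweil_Integration.integral_combine[OF aT int] by simp
    have "norm (integral {T..X} g) \<le> e/2 * (X - T)"
    proof (rule int_bound)
      show "g integrable_on {T..X}" by (rule integrable_subinterval_real[OF int]) (use aT in auto)
      show "norm (g x) \<le> e / 2" if "x \<in> {T..X}" for x
        using T0[of x] that unfolding T_def by auto
    qed (use aT e in auto)
    also have "\<dots> \<le> e/2 * X" using e aT unfolding T_def by (intro mult_left_mono) auto
    finally have n2: "norm (integral {T..X} g) \<le> e/2 * X" .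
    have "C < e/2 * X" using XC e by (simp add: field_simps)
    then have "norm (integral {a..X} g) < e * X"
      using n2 norm_triangle_ineq[of "integral {a..T} g" "integral {T..X} g"] unfolding split C_def by linarith
    then show ?thesis using Xpos by (simp add: norm_divide field_simps)
  qed
  then show "eventually (\<lambda>X. dist (integral {a..X} g / of_real X) 0 < e) at_top"
    unfolding eventually_at_top_linorder by (intro exI[of _ "max T (2 * C / e + 1)"]) auto
qed

lemma P_tendsto: "Lc g \<Longrightarrow> (g \<longlongrightarrow> 0) at_top \<Longrightarrow> (cesaroP g \<longlongrightarrow> 0) at_top"
  unfolding cesaroP_def Lc_def by (rule ces_gen) auto

lemma Piter_tendsto: "Lc g \<Longrightarrow> (g \<longlongrightarrow> 0) at_top \<Longrightarrow> ((cesaroP ^^ k) g \<longlongrightarrow> 0) at_top"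
  by (induction k) (auto intro: P_tendsto Lc_iter)

lemma fb_deriv:
  assumes "x > 0" "x \<notin> \<int>"
  shows "(fb \<beta> (Suc r) has_vector_derivative (\<beta> * fb (\<beta> - 1) (Suc r) x + fb \<beta> r x)) (at x)"
proof -
  have nz: "complex_of_real x \<notin> \<real>\<^sub>\<le>\<^sub>0" using assms(1) by (auto simp: complex_nonpos_Reals_iff)
  have d1: "((\<lambda>x. complex_of_real x powr \<beta>) has_vector_derivative \<beta> * of_real x powr (\<beta> - 1)) (at x)"
    by (rule has_vector_derivative_real_field[OF has_field_derivative_powr[OF nz]])
  have d2: "((\<lambda>x. complex_of_real (qpoly (Suc r) (frac x))) has_vector_derivative of_real (qpoly r (frac x))) (at x)"
    by (rule has_vector_derivative_of_real[OF Q_deriv[OF assms(2)]])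
  show ?thesis
    using has_vector_derivative_mult[OF d1 d2] unfolding fb_def
    by (simp add: algebra_simps)
qed

lemma fb_isCont2:
  assumes "x > 0" "r \<ge> 2"
  shows "isCont (fb \<beta> r) x"
proof -
  have "isCont (\<lambda>x. qpoly r (frac x)) x" by (rule Q_cont[OF assms(2)])
  then have "isCont (\<lambda>x. of_real (qpoly r (frac x)) :: complex) x"
    by (intro continuous_intros)
  moreover have "isCont (\<lambda>x. of_real x powr \<beta>) x"
    using assms(1) by (intro isCont_powr_complex continuous_intros) (auto simp: complex_nonpos_Reals_iff)
  ultimately show ?thesis unfolding fb_def by (rule isCont_mult[rotated])
qed

lemma fb_int2:
  assumes "a > 0" "r \<ge> 2"
  shows "fb \<beta> r integrable_on {a..b}"
  by (rule integrable_continuous_interval, rule continuous_at_imp_continuous_on)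
     (use fb_isCont2 assms in auto)

lemma ibp:
  assumes "X \<ge> 1" "r \<ge> 1"
  shows "integral {1..X} (fb \<beta> r) = fb \<beta> (Suc r) X - fb \<beta> (Suc r) 1 - \<beta> * integral {1..X} (fb (\<beta> - 1) (Suc r))"
proof -
  define S where "S = (of_int ` {0..\<lceil>X\<rceil>} :: real set)"
  have h: "((\<lambda>x. \<beta> * fb (\<beta> - 1) (Suc r) x + fb \<beta> r x) has_integral (fb \<beta> (Suc r) X - fb \<beta> (Suc r) 1)) {1..X}"
  proof (rule fundamental_theorem_of_calculus_interior_strong[where S=S])
    show "finite S" unfolding S_def by simp
    show "continuous_on {1..X} (fb \<beta> (Suc r))"
      by (rule continuous_at_imp_continuous_on) (use fb_isCont2 assms in auto)
    fix x assume x: "x \<in> {1<..<X} - S"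
    have "x \<notin> \<int>"
    proof
      assume "x \<in> \<int>"
      then obtain n where n: "x = of_int n" by (auto elim: Ints_cases)
      then have "n \<in> {0..\<lceil>X\<rceil>}" using x by (auto, linarith)
      then show False using x n unfolding S_def by auto
    qed
    then show "(fb \<beta> (Suc r) has_vector_derivative (\<beta> * fb (\<beta> - 1) (Suc r) x + fb \<beta> r x)) (at x)"
      using x by (intro fb_deriv) auto
  qed (use assms in auto)
  have i2: "fb (\<beta> - 1) (Suc r) integrable_on {1..X}" by (rule fb_int2) (use assms in auto)
  have h2: "((\<lambda>x. \<beta> * fb (\<beta> - 1) (Suc r) x) has_integral \<beta> * integral {1..X} (fb (\<beta> - 1) (Suc r))) {1..X}"
    by (rule has_integral_mult_right[OF integrable_integral[OF i2]])
  have "((\<lambda>x. (\<beta> * fb (\<beta> - 1) (Suc r) x + fb \<beta> r x) - \<beta> * fb (\<beta> - 1) (Suc r) x) has_integral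
         (fb \<beta> (Suc r) X - fb \<beta> (Suc r) 1) - \<beta> * integral {1..X} (fb (\<beta> - 1) (Suc r))) {1..X}"
    by (rule has_integral_diff[OF h h2])
  then have "(fb \<beta> r has_integral
         (fb \<beta> (Suc r) X - fb \<beta> (Suc r) 1) - \<beta> * integral {1..X} (fb (\<beta> - 1) (Suc r))) {1..X}"
    by simp
  then show ?thesis by (rule integral_unique)
qed



lemma cdiv0: "((\<lambda>X. c / complex_of_real X) \<longlongrightarrow> 0) at_top"
  by (rule tendsto_divide_0[OF tendsto_const filterlim_of_real_at_infinity])

lemma fb_div: "X > 0 \<Longrightarrow> fb \<beta> (Suc r) X / of_real X = fb (\<beta> - 1) (Suc r) X"
  by (simp add: fb_def powr_diff)

lemma base:
  assumes r: "r \<ge> 1" and b0: "Re \<beta> \<ge> 0" and b1: "Re \<beta> < 1"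
  shows "(cesaroP (fb \<beta> r) \<longlongrightarrow> 0) at_top"
proof -
  define c where "c = integral {0..1} (fb \<beta> r) - fb \<beta> (Suc r) 1"
  have eq: "cesaroP (fb \<beta> r) X = c / of_real X + fb (\<beta> - 1) (Suc r) X
      - \<beta> * (integral {1..X} (fb (\<beta> - 1) (Suc r)) / of_real X)" if X: "X \<ge> 1" for X
  proof -
    have "integral {0..X} (fb \<beta> r) = integral {0..1} (fb \<beta> r) + integral {1..X} (fb \<beta> r)"
      using Henstock_Kurzweil_Integration.integral_combine[of 0 1 X "fb \<beta> r"] X fb_int[OF r b0] by simp
    also have "\<dots> = c + fb \<beta> (Suc r) X - \<beta> * integral {1..X} (fb (\<beta> - 1) (Suc r))"
      unfolding ibp[OF X r] c_def by simp
    finally have "cesaroP (fb \<beta> r) X = (c + fb \<beta> (Suc r) X - \<beta> * integral {1..X} (fb (\<beta> - 1) (Suc r))) / of_real X"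
      unfolding cesaroP_def by simp
    also have "\<dots> = c / of_real X + fb \<beta> (Suc r) X / of_real X - \<beta> * (integral {1..X} (fb (\<beta> - 1) (Suc r)) / of_real X)"
      by (simp add: diff_divide_distrib add_divide_distrib)
    finally show ?thesis using fb_div[of X \<beta> r] X by simp
  qed
  have l1: "(fb (\<beta> - 1) (Suc r) \<longlongrightarrow> 0) at_top" by (rule fb_tendsto0) (use b1 in simp)
  have l2: "((\<lambda>X. integral {1..X} (fb (\<beta> - 1) (Suc r)) / of_real X) \<longlongrightarrow> 0) at_top"
    by (rule ces_gen[OF _ l1]) (rule fb_int2, use r in auto)
  have "((\<lambda>X. c / of_real X + fb (\<beta> - 1) (Suc r) X
      - \<beta> * (integral {1..X} (fb (\<beta> - 1) (Suc r)) / of_real X)) \<longlongrightarrow> 0 + 0 - \<beta> * 0) at_top"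
    by (intro tendsto_intros cdiv0 l1 l2)
  then have "((\<lambda>X. c / of_real X + fb (\<beta> - 1) (Suc r) X
      - \<beta> * (integral {1..X} (fb (\<beta> - 1) (Suc r)) / of_real X)) \<longlongrightarrow> 0) at_top" by simp
  then show ?thesis
    by (rule Lim_transform_eventually)
       (use eventually_ge_at_top[of 1] in \<open>eventually_elim, simp add: eq\<close>)
qed

lemma step:
  assumes r: "r \<ge> 1" and b1: "Re \<beta> \<ge> 1"
  defines "g \<equiv> fb (\<beta> - 1) (Suc r)"
  defines "w \<equiv> (\<lambda>X. cesaroP (fb \<beta> r) X + ((-1) * g X + \<beta> * cesaroP g X))"
  shows "Lc w" "(w \<longlongrightarrow> 0) at_top"
    "cesaroP (fb \<beta> r) = (\<lambda>X. g X + ((- \<beta>) * cesaroP g X + w X))"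
proof -
  have b0: "Re \<beta> \<ge> 0" using b1 by simp
  have Lf: "Lc (fb \<beta> r)" by (rule Lc_fb[OF r b0])
  have Lg: "Lc g" unfolding g_def by (rule Lc_fb) (use b1 in auto)
  show "Lc w" unfolding w_def
    by (intro Lc_add Lc_scale Lc_P Lf Lg)
  show "cesaroP (fb \<beta> r) = (\<lambda>X. g X + ((- \<beta>) * cesaroP g X + w X))"
    unfolding w_def by (auto simp: algebra_simps)
  define c where "c = integral {0..1} (fb \<beta> r) - fb \<beta> (Suc r) 1 + \<beta> * integral {0..1} g"
  have eq: "w X = c / of_real X" if X: "X \<ge> 1" for X
  proof -
    have gi: "g integrable_on {0..X}" using Lg unfolding Lc_def by auto
    have "integral {0..1} g + integral {1..X} g = integral {0..X} g"
      using Henstock_Kurzweil_Integration.integral_combine[of 0 1 X g] X gi by simp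
    then have sg: "integral {1..X} g = integral {0..X} g - integral {0..1} g"
      by (metis add_diff_cancel_left')
    have "integral {0..X} (fb \<beta> r) = integral {0..1} (fb \<beta> r) + integral {1..X} (fb \<beta> r)"
      using Henstock_Kurzweil_Integration.integral_combine[of 0 1 X "fb \<beta> r"] X fb_int[OF r b0] by simp
    also have "\<dots> = c + fb \<beta> (Suc r) X - \<beta> * integral {0..X} g"
      unfolding ibp[OF X r] c_def g_def[symmetric] sg by (simp add: algebra_simps)
    finally have "cesaroP (fb \<beta> r) X = (c + fb \<beta> (Suc r) X - \<beta> * integral {0..X} g) / of_real X"
      unfolding cesaroP_def by simp
    also have "\<dots> = c / of_real X + fb \<beta> (Suc r) X / of_real X - \<beta> * cesaroP g X"
      by (simp add: diff_divide_distrib add_divide_distrib cesaroP_def)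
    finally show ?thesis using fb_div[of X \<beta> r] X unfolding w_def g_def by simp
  qed
  show "(w \<longlongrightarrow> 0) at_top"
    by (rule Lim_transform_eventually[OF cdiv0[of c]])
       (use eventually_ge_at_top[of 1] in \<open>eventually_elim, simp add: eq\<close>)
qed

lemma main_ind:
  "\<forall>\<beta> r. r \<ge> 1 \<longrightarrow> 0 \<le> Re \<beta> \<longrightarrow> Re \<beta> < real n \<longrightarrow> ((cesaroP ^^ n) (fb \<beta> r) \<longlongrightarrow> 0) at_top"
proof (induction n)
  case 0 then show ?case by auto
next
  case (Suc k)
  show ?case
  proof (intro allI impI)
    fix \<beta> :: complex and r :: nat
    assume r: "r \<ge> 1" and b0: "0 \<le> Re \<beta>" and bk: "Re \<beta> < real (Suc k)"
    have split: "(cesaroP ^^ Suc k) (fb \<beta> r) = (cesaroP ^^ k) (cesaroP (fb \<beta> r))"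
      by (simp only: funpow_Suc_right comp_apply)
    show "((cesaroP ^^ Suc k) (fb \<beta> r) \<longlongrightarrow> 0) at_top"
    proof (cases "Re \<beta> < 1")
      case True
      show ?thesis unfolding split
        by (rule Piter_tendsto[OF Lc_P[OF Lc_fb[OF r b0]] base[OF r b0 True]])
    next
      case False
      then have b1: "Re \<beta> \<ge> 1" by simp
      define g where "g = fb (\<beta> - 1) (Suc r)"
      define w where "w = (\<lambda>X. cesaroP (fb \<beta> r) X + ((-1) * g X + \<beta> * cesaroP g X))"
      have Lw: "Lc w" and lw: "(w \<longlongrightarrow> 0) at_top"
        and eqP: "cesaroP (fb \<beta> r) = (\<lambda>X. g X + ((- \<beta>) * cesaroP g X + w X))"
        using step[OF r b1] unfolding g_def w_def by auto
      have Lg: "Lc g" unfolding g_def by (rule Lc_fb) (use b1 in auto)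
      have k1: "Re (\<beta> - 1) < real k" using bk by simp
      have lg: "((cesaroP ^^ k) g \<longlongrightarrow> 0) at_top"
        using Suc.IH k1 b1 unfolding g_def by auto
      have lPg: "((cesaroP ^^ k) (cesaroP g) \<longlongrightarrow> 0) at_top"
      proof -
        have "(cesaroP ^^ k) (cesaroP g) = cesaroP ((cesaroP ^^ k) g)"
        proof -
          have "(cesaroP ^^ Suc k) g = (cesaroP ^^ k) (cesaroP g)"
            by (simp only: funpow_Suc_right comp_apply)
          then show ?thesis by simp
        qed
        then show ?thesis using P_tendsto[OF Lc_iter[OF Lg] lg] by simp
      qed
      have lw2: "((cesaroP ^^ k) w \<longlongrightarrow> 0) at_top" by (rule Piter_tendsto[OF Lw lw])
      have "(cesaroP ^^ k) (cesaroP (fb \<beta> r)) =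
         (\<lambda>X. (cesaroP ^^ k) g X + ((- \<beta>) * (cesaroP ^^ k) (cesaroP g) X + (cesaroP ^^ k) w X))"
      proof -
        have A1: "(cesaroP ^^ k) (\<lambda>X. g X + ((- \<beta>) * cesaroP g X + w X)) =
          (\<lambda>X. (cesaroP ^^ k) g X + (cesaroP ^^ k) (\<lambda>X. (- \<beta>) * cesaroP g X + w X) X)"
          by (rule Piter_add[of g "\<lambda>X. (- \<beta>) * cesaroP g X + w X" k]) (intro Lc_add Lc_scale Lc_P Lg Lw)+
        have A2: "(cesaroP ^^ k) (\<lambda>X. (- \<beta>) * cesaroP g X + w X) =
          (\<lambda>X. (cesaroP ^^ k) (\<lambda>X. (- \<beta>) * cesaroP g X) X + (cesaroP ^^ k) w X)"
          by (rule Piter_add[of "\<lambda>X. (- \<beta>) * cesaroP g X" w k]) (intro Lc_add Lc_scale Lc_P Lg Lw)+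
        have A3: "(cesaroP ^^ k) (\<lambda>X. (- \<beta>) * cesaroP g X) = (\<lambda>X. (- \<beta>) * (cesaroP ^^ k) (cesaroP g) X)"
          by (rule Piter_scale)
        show ?thesis unfolding eqP A1 A2 A3 ..
      qed
      moreover have "((\<lambda>X. (cesaroP ^^ k) g X + ((- \<beta>) * (cesaroP ^^ k) (cesaroP g) X + (cesaroP ^^ k) w X))
          \<longlongrightarrow> 0 + ((- \<beta>) * 0 + 0)) at_top"
        by (intro tendsto_intros lg lPg lw2)
      ultimately show ?thesis unfolding split by simp
    qed
  qed
qed

theorem mainTheorem2:
  fixes \<delta> :: complex and r :: nat
  assumes "\<delta> \<noteq> 0" and "Re \<delta> \<ge> 0" and "r \<ge> 1"
  shows "(((cesaroP ^^ (nat \<lfloor>Re \<delta>\<rfloor> + 1))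
            (\<lambda>X. (of_real X) powr \<delta> * of_real (qpoly r (frac X))))
          \<longlongrightarrow> 0) at_top"
proof -
  have "Re \<delta> < real (nat \<lfloor>Re \<delta>\<rfloor> + 1)" using assms(2) by linarith
  then have "((cesaroP ^^ (nat \<lfloor>Re \<delta>\<rfloor> + 1)) (fb \<delta> r) \<longlongrightarrow> 0) at_top"
    using main_ind assms by blast
  moreover have "fb \<delta> r = (\<lambda>X. (of_real X) powr \<delta> * of_real (qpoly r (frac X)))"
    by (rule ext) (simp add: fb_def)
  ultimately show ?thesis by simp
qed


end
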